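(* Let $G\sim G_{n,p}$ with $p=\frac{\log n+\omega(n)}{n}$, $\omega(n)\to\infty$, and $np=O(\log n)$. Let $\theta=\frac{1}{e^2(np)^{1/2}}$ and $\alpha=(np)^{1/4}$. Then w.h.p.: (l) for every $S\subseteq[n]$ with $n/(np)^2\le|S|\le n_1$, there are at most $\theta|S|$ vertices $v\in S$ with $d_{[n]\setminus S}(v)\notin[(1-\varepsilon)(n-|S|)p,(1+\varepsilon)(n-|S|)p]$; (m) there do not exist disjoint $S,T\subseteq[n]$ with $n/(np)^{9/8}\le|S|\le n/(np)^{1/3}$ and $|T|=\theta(n-|S|)$ such that $e(S:T)\ge\alpha|S||T|p$.
   Context: $d_A(v)=|N(v)\cap A|$; $e(S:T)$ is the number of edges between disjoint sets $S,T$. $\varepsilon=1/\log\log\log n$, $n_1=n-n/(np)^{1/2}$. W.h.p. means with probability $1-o(1)$. *)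

theory Defs
  imports "HOL-Probability.Probability" "HOL-Library.Landau_Symbols"
begin

definition all_edges :: "nat \<Rightarrow> nat set set" where
  "all_edges n = {e. \<exists>i j. i < j \<and> j < n \<and> e = {i, j}}"

definition gnp :: "nat \<Rightarrow> real \<Rightarrow> nat set set pmf" where
  "gnp n p = map_pmf (\<lambda>f. {e \<in> all_edges n. f e})
                     (Pi_pmf (all_edges n) False (\<lambda>_. bernoulli_pmf p))"

definition deg_in :: "nat set set \<Rightarrow> nat set \<Rightarrow> nat \<Rightarrow> nat" where
  "deg_in G A v = card {u \<in> A. {u, v} \<in> G}"

definition e_between :: "nat set set \<Rightarrow> nat set \<Rightarrow> nat set \<Rightarrow> nat" where
  "e_between G S T = card {(u, v). u \<in> S \<and> v \<in> T \<and> {u, v} \<in> G}"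

definition eps :: "nat \<Rightarrow> real" where
  "eps n = 1 / ln (ln (ln (real n)))"

definition n1 :: "nat \<Rightarrow> real \<Rightarrow> real" where
  "n1 n p = real n - real n / (real n * p) powr (1/2)"

definition theta :: "nat \<Rightarrow> real \<Rightarrow> real" where
  "theta n p = 1 / (exp 2 * (real n * p) powr (1/2))"

definition alpha :: "nat \<Rightarrow> real \<Rightarrow> real" where
  "alpha n p = (real n * p) powr (1/4)"

definition prop_l :: "nat \<Rightarrow> real \<Rightarrow> nat set set \<Rightarrow> bool" where
  "prop_l n p G \<longleftrightarrow>
     (\<forall>S. S \<subseteq> {..<n} \<longrightarrow> real n / (real n * p)^2 \<le> real (card S) \<longrightarrow> real (card S) \<le> n1 n p \<longrightarrow>
        real (card {v \<in> S. real (deg_in G ({..<n} - S) v) \<notin>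
             {(1 - eps n) * (real n - real (card S)) * p .. (1 + eps n) * (real n - real (card S)) * p}})
          \<le> theta n p * real (card S))"

definition prop_m :: "nat \<Rightarrow> real \<Rightarrow> nat set set \<Rightarrow> bool" where
  "prop_m n p G \<longleftrightarrow>
     \<not> (\<exists>S T. S \<subseteq> {..<n} \<and> T \<subseteq> {..<n} \<and> S \<inter> T = {} \<and>
          real n / (real n * p) powr (9/8) \<le> real (card S) \<and>
          real (card S) \<le> real n / (real n * p) powr (1/3) \<and>
          int (card T) = \<lceil>theta n p * (real n - real (card S))\<rceil> \<and>
          real (e_between G S T) \<ge> alpha n p * real (card S) * real (card T) * p)"

end

theory Submission
  imports Defs "HOL-Real_Asymp.Real_Asymp"
begin



lemma finite_all_edges: "finite (all_edges n)"
proof -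
  have "all_edges n \<subseteq> Pow {..<n}" unfolding all_edges_def by auto
  thus ?thesis by (rule finite_subset) auto
qed

lemma card_edges_binomial:
  assumes p: "p \<in> {0..1}" and E: "E \<subseteq> all_edges n"
  shows "map_pmf (\<lambda>G. card (G \<inter> E)) (gnp n p) = binomial_pmf (card E) p"
proof -
  have fE: "finite E" using E finite_all_edges finite_subset by blast
  have "binomial_pmf (card E) p = map_pmf (\<lambda>f. card {x\<in>E. f x}) (Pi_pmf E False (\<lambda>_. bernoulli_pmf p))"
    by (rule binomial_pmf_altdef') (use fE p in auto)
  also have "Pi_pmf E False (\<lambda>_. bernoulli_pmf p) = map_pmf (\<lambda>f x. if x \<in> E then f x else False) (Pi_pmf (all_edges n) False (\<lambda>_. bernoulli_pmf p))"
    by (rule Pi_pmf_subset) (use finite_all_edges E in auto)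
  also have "map_pmf (\<lambda>f. card {x\<in>E. f x}) \<dots> = map_pmf (\<lambda>f. card {x\<in>E. f x}) (Pi_pmf (all_edges n) False (\<lambda>_. bernoulli_pmf p))"
    unfolding pmf.map_comp o_def by (intro map_pmf_cong refl arg_cong[where f=card]) auto
  also have "\<dots> = map_pmf (\<lambda>G. card (G \<inter> E)) (gnp n p)"
    unfolding gnp_def pmf.map_comp o_def
  proof (rule map_pmf_cong[OF refl])
    fix f assume "f \<in> set_pmf (Pi_pmf (all_edges n) False (\<lambda>_. bernoulli_pmf p))"
    have "{x\<in>E. f x} = {e \<in> all_edges n. f e} \<inter> E" using E by auto
    thus "card {x\<in>E. f x} = card ({e \<in> all_edges n. f e} \<inter> E)" by simp
  qed
  finally show ?thesis by simp
qed

lemma prob_card_edges: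
  assumes p: "p \<in> {0..1}" and E: "E \<subseteq> all_edges n"
  shows "measure_pmf.prob (gnp n p) {G. P (card (G \<inter> E))} = measure_pmf.prob (binomial_pmf (card E) p) {k. P k}"
proof -
  have "measure_pmf.prob (gnp n p) {G. P (card (G \<inter> E))} =
        measure_pmf.prob (map_pmf (\<lambda>G. card (G \<inter> E)) (gnp n p)) {k. P k}"
    by (simp add: vimage_def)
  thus ?thesis using card_edges_binomial[OF assms] by simp
qed



lemma binom_tail_sum:
  assumes p: "p \<in> {0..1}" and h: "\<And>k. k \<le> N \<Longrightarrow> P k \<Longrightarrow> 1 \<le> exp (l * (real k - a))"
  shows "measure_pmf.prob (binomial_pmf N p) {k. P k} \<le> exp (N * p * (exp l - 1) - l * a)"
proof -
  have sub: "set_pmf (binomial_pmf N p) \<subseteq> {..N}"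
    using p by (auto simp: set_pmf_binomial_eq)
  have "measure_pmf.prob (binomial_pmf N p) {k. P k} = measure_pmf.prob (binomial_pmf N p) ({k. P k} \<inter> {..N})"
  proof -
    have "{k. P k} \<inter> set_pmf (binomial_pmf N p) = ({k. P k} \<inter> {..N}) \<inter> set_pmf (binomial_pmf N p)"
      using sub by auto
    thus ?thesis by (metis measure_Int_set_pmf)
  qed
  also have "\<dots> = (\<Sum>k\<in>{k. P k} \<inter> {..N}. pmf (binomial_pmf N p) k)"
    by (rule measure_measure_pmf_finite) auto
  also have "\<dots> \<le> (\<Sum>k\<in>{..N}. pmf (binomial_pmf N p) k * exp (l * (real k - a)))"
  proof -
    have "(\<Sum>k\<in>{k. P k} \<inter> {..N}. pmf (binomial_pmf N p) k) \<le> (\<Sum>k\<in>{k. P k} \<inter> {..N}. pmf (binomial_pmf N p) k * exp (l * (real k - a)))"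
    proof (intro sum_mono)
      fix k assume "k \<in> {k. P k} \<inter> {..N}"
      hence "1 \<le> exp (l * (real k - a))" using h by auto
      thus "pmf (binomial_pmf N p) k \<le> pmf (binomial_pmf N p) k * exp (l * (real k - a))"
        using mult_left_mono[of 1 _ "pmf (binomial_pmf N p) k"] by (simp add: pmf_nonneg)
    qed
    also have "\<dots> \<le> (\<Sum>k\<in>{..N}. pmf (binomial_pmf N p) k * exp (l * (real k - a)))"
      by (intro sum_mono2) (auto simp: pmf_nonneg)
    finally show ?thesis .
  qed
  also have "\<dots> = exp (- l * a) * (\<Sum>k\<le>N. real (N choose k) * (p * exp l)^k * (1 - p)^(N - k))"
    unfolding sum_distrib_left
  proof (intro sum.cong refl)
    fix k assume "k \<in> {..N}"
    have "exp (l * (real k - a)) = exp (-l * a) * exp l ^ k"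
      by (simp add: exp_of_nat_mult[symmetric] exp_add[symmetric] algebra_simps)
    thus "pmf (binomial_pmf N p) k * exp (l * (real k - a)) = exp (- l * a) * (real (N choose k) * (p * exp l) ^ k * (1 - p) ^ (N - k))"
      using p by (simp add: power_mult_distrib)
  qed
  also have "(\<Sum>k\<le>N. real (N choose k) * (p * exp l)^k * (1 - p)^(N - k)) = (p * exp l + (1 - p))^N"
    by (subst binomial_ring) (simp add: mult_ac)
  also have "(p * exp l + (1 - p))^N \<le> exp (p * (exp l - 1)) ^ N"
  proof (rule power_mono)
    show "p * exp l + (1 - p) \<le> exp (p * (exp l - 1))"
      using exp_ge_add_one_self[of "p * (exp l - 1)"] by (simp add: algebra_simps)
    show "0 \<le> p * exp l + (1 - p)" using p by auto
  qed
  also have "exp (p * (exp l - 1)) ^ N = exp (N * p * (exp l - 1))"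
    by (simp add: exp_of_nat_mult[symmetric] mult_ac)
  finally show ?thesis
    by (simp add: exp_add[symmetric] mult_left_mono algebra_simps)
qed

lemma binom_upper:
  assumes p: "p \<in> {0..1}" and l: "l \<ge> 0"
  shows "measure_pmf.prob (binomial_pmf N p) {k. real k \<ge> a} \<le> exp (N * p * (exp l - 1) - l * a)"
  by (rule binom_tail_sum[OF p]) (use l in auto)

lemma binom_lower:
  assumes p: "p \<in> {0..1}" and l: "l \<ge> 0"
  shows "measure_pmf.prob (binomial_pmf N p) {k. real k \<le> a} \<le> exp (N * p * (exp (-l) - 1) + l * a)"
proof -
  have "measure_pmf.prob (binomial_pmf N p) {k. real k \<le> a} \<le> exp (N * p * (exp (-l) - 1) - (-l) * a)"
    by (rule binom_tail_sum[OF p]) (use l in \<open>auto intro!: mult_nonneg_nonpos\<close>)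
  thus ?thesis by simp
qed

lemma exp_neg_le: "x \<ge> 0 \<Longrightarrow> exp (-x) \<le> 1 - x + x^2" for x :: real
proof -
  assume x: "x \<ge> 0"
  have "exp (-x) = 1 / exp x" by (simp add: exp_minus field_simps)
  also have "\<dots> \<le> 1 / (1 + x)" using x by (intro divide_left_mono) (auto simp: add_pos_nonneg)
  also have "\<dots> \<le> 1 - x + x^2"
  proof -
    have "1 \<le> (1 - x + x^2) * (1 + x)" using x by (simp add: algebra_simps power2_eq_square power3_eq_cube)
    thus ?thesis using x by (simp add: field_simps)
  qed
  finally show ?thesis .
qed

lemma chernoff_upper:
  assumes p: "p \<in> {0..1}" and d: "0 \<le> d" "d \<le> 1"
  shows "measure_pmf.prob (binomial_pmf N p) {k. real k \<ge> (1 + d) * (N * p)} \<le> exp (- (d^2 * (N * p) / 4))"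
proof -
  have mu: "N * p \<ge> 0" using p by auto
  have "exp (d/2) \<le> 1 + d/2 + (d/2)^2" by (rule exp_bound) (use d in auto)
  hence "N * p * (exp (d/2) - 1) \<le> N * p * (d/2 + (d/2)^2)" using mu by (intro mult_left_mono) auto
  hence "N * p * (exp (d/2) - 1) - d/2 * ((1 + d) * (N * p)) \<le> - (d^2 * (N * p) / 4)"
    by (simp add: algebra_simps power2_eq_square)
  moreover have "measure_pmf.prob (binomial_pmf N p) {k. real k \<ge> (1 + d) * (N * p)} \<le> exp (N * p * (exp (d/2) - 1) - d/2 * ((1 + d) * (N * p)))"
    by (rule binom_upper[OF p]) (use d in auto)
  ultimately show ?thesis by (meson exp_le_cancel_iff order_trans)
qed

lemma chernoff_lower:
  assumes p: "p \<in> {0..1}" and d: "0 \<le> d"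
  shows "measure_pmf.prob (binomial_pmf N p) {k. real k \<le> (1 - d) * (N * p)} \<le> exp (- (d^2 * (N * p) / 4))"
proof -
  have mu: "N * p \<ge> 0" using p by auto
  have "exp (-(d/2)) \<le> 1 - d/2 + (d/2)^2" by (rule exp_neg_le) (use d in auto)
  hence "N * p * (exp (-(d/2)) - 1) \<le> N * p * (-(d/2) + (d/2)^2)" using mu by (intro mult_left_mono) auto
  hence "N * p * (exp (-(d/2)) - 1) + d/2 * ((1 - d) * (N * p)) \<le> - (d^2 * (N * p) / 4)"
    by (simp add: algebra_simps power2_eq_square)
  moreover have "measure_pmf.prob (binomial_pmf N p) {k. real k \<le> (1 - d) * (N * p)} \<le> exp (N * p * (exp (-(d/2)) - 1) + d/2 * ((1 - d) * (N * p)))"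
    by (rule binom_lower[OF p]) (use d in auto)
  ultimately show ?thesis by (meson exp_le_cancel_iff order_trans)
qed

lemma chernoff_large:
  assumes p: "p \<in> {0..1}" and A: "A \<ge> 1"
  shows "measure_pmf.prob (binomial_pmf N p) {k. real k \<ge> A * (N * p)} \<le> exp (- (A * (N * p) * (ln A - 1)))"
proof -
  have mu: "N * p \<ge> 0" using p by auto
  have "N * p * (exp (ln A) - 1) - ln A * (A * (N * p)) \<le> - (A * (N * p) * (ln A - 1))"
    using A mu by (simp add: algebra_simps)
  moreover have "measure_pmf.prob (binomial_pmf N p) {k. real k \<ge> A * (N * p)} \<le> exp (N * p * (exp (ln A) - 1) - ln A * (A * (N * p)))"
    by (rule binom_upper[OF p]) (use A in auto)
  ultimately show ?thesis by (meson exp_le_cancel_iff order_trans)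
qed




definition Eset :: "nat set \<Rightarrow> nat set \<Rightarrow> nat set set" where
  "Eset S T = (\<lambda>(u,v). {u,v}) ` (S \<times> T)"

lemma inj_pair_set:
  assumes "S \<inter> T = {}"
  shows "inj_on (\<lambda>(u,v). {u::nat,v}) (S \<times> T)"
proof (rule inj_onI, clarify)
  fix u v u' v' assume h: "u \<in> S" "v \<in> T" "u' \<in> S" "v' \<in> T" "{u,v} = {u',v'}"
  hence "u \<noteq> v'" "v \<noteq> u'" using assms by auto
  moreover have "u \<in> {u',v'}" "v \<in> {u',v'}" using h(5) by blast+
  ultimately show "u = u' \<and> v = v'" by blast
qed

lemma card_Eset:
  assumes "S \<inter> T = {}"
  shows "card (Eset S T) = card S * card T"
  unfolding Eset_def using card_image[OF inj_pair_set[OF assms]] by (simp add: card_cartesian_product)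

lemma Eset_sub:
  assumes "S \<inter> T = {}" "S \<subseteq> {..<n}" "T \<subseteq> {..<n}"
  shows "Eset S T \<subseteq> all_edges n"
proof
  fix e assume "e \<in> Eset S T"
  then obtain u v where uv: "u \<in> S" "v \<in> T" "e = {u,v}" unfolding Eset_def by auto
  hence ne: "u \<noteq> v" using assms by auto
  show "e \<in> all_edges n"
  proof (cases "u < v")
    case True
    have "v < n" using uv assms by auto
    thus ?thesis using uv True unfolding all_edges_def by blast
  next
    case False
    hence "v < u" using ne by auto
    moreover have "u < n" using uv assms by auto
    moreover have "e = {v,u}" using uv by auto
    ultimately show ?thesis unfolding all_edges_def by blast
  qed
qed

lemma e_between_eq:
  assumes "S \<inter> T = {}"
  shows "e_between G S T = card (G \<inter> Eset S T)"
proof -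
  let ?f = "\<lambda>(u,v). {u::nat,v}"
  let ?P = "{(u, v). u \<in> S \<and> v \<in> T \<and> {u, v} \<in> G}"
  have sub: "?P \<subseteq> S \<times> T" by auto
  have "?f ` ?P = G \<inter> Eset S T"
  proof
    show "?f ` ?P \<subseteq> G \<inter> Eset S T"
    proof
      fix e assume "e \<in> ?f ` ?P"
      then obtain u v where "u \<in> S" "v \<in> T" "{u,v} \<in> G" "e = {u,v}" by auto
      thus "e \<in> G \<inter> Eset S T" unfolding Eset_def by auto
    qed
    show "G \<inter> Eset S T \<subseteq> ?f ` ?P"
    proof
      fix e assume "e \<in> G \<inter> Eset S T"
      then obtain u v where "u \<in> S" "v \<in> T" "e = {u,v}" "e \<in> G" unfolding Eset_def by auto
      thus "e \<in> ?f ` ?P" by (intro image_eqI[of _ _ "(u,v)"]) auto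
    qed
  qed
  moreover have "inj_on ?f ?P" using inj_on_subset[OF inj_pair_set[OF assms] sub] .
  hence "card (?f ` ?P) = card ?P" by (rule card_image)
  ultimately show ?thesis unfolding e_between_def by simp
qed

lemma sum_deg:
  assumes "finite B" "finite A"
  shows "(\<Sum>v\<in>B. deg_in G A v) = e_between G B A"
proof -
  have "{(u, v). u \<in> B \<and> v \<in> A \<and> {u, v} \<in> G} = Sigma B (\<lambda>u. {v\<in>A. {v,u} \<in> G})"
    by (auto simp: insert_commute)
  hence "e_between G B A = card (Sigma B (\<lambda>u. {v\<in>A. {v,u} \<in> G}))" unfolding e_between_def by simp
  also have "\<dots> = (\<Sum>u\<in>B. card {v\<in>A. {v,u} \<in> G})" using assms by (subst card_SigmaI) auto
  finally show ?thesis unfolding deg_in_def by simp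
qed




lemma pow_fact_le_exp:
  fixes x :: real assumes x: "x \<ge> 0"
  shows "x ^ k / fact k \<le> exp x"
proof -
  have g: "(\<lambda>j. x ^ j / fact j) sums exp x"
    using exp_converges[of x] by (simp add: divide_inverse mult.commute scaleR_conv_of_real)
  have f: "(\<lambda>j. if j = k then x ^ k / fact k else 0) sums (x ^ k / fact k)"
    by (rule sums_single)
  show ?thesis
    by (rule sums_le[OF _ f g]) (use x in auto)
qed

lemma choose_le_exp:
  fixes x :: real
  assumes x: "0 < x" "x \<le> real k"
  shows "real (n choose k) \<le> (exp 1 * real n / x) ^ k"
proof -
  have "real (n choose k) * fact k \<le> real n ^ k"
    using binomial_fact_pow[of n k] by (metis of_nat_fact of_nat_le_iff of_nat_mult of_nat_power)
  hence "real (n choose k) \<le> real n ^ k / fact k"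
    by (simp add: field_simps)
  also have "\<dots> = (real n / real k) ^ k * (real k ^ k / fact k)"
    using x by (simp add: power_divide)
  also have "\<dots> \<le> (real n / real k) ^ k * exp (real k)"
    by (intro mult_left_mono pow_fact_le_exp) auto
  also have "\<dots> = (exp 1 * real n / real k) ^ k"
    by (simp add: power_mult_distrib exp_of_nat_mult[symmetric] power_divide)
  also have "\<dots> \<le> (exp 1 * real n / x) ^ k"
    using x by (intro power_mono divide_left_mono) auto
  finally show ?thesis .
qed

lemma prob_UN_le:
  fixes M :: "'a pmf"
  assumes "finite I"
  shows "measure_pmf.prob M (\<Union>i\<in>I. A i) \<le> (\<Sum>i\<in>I. measure_pmf.prob M (A i))"
  by (rule measure_pmf.finite_measure_subadditive_finite) (use assms in auto)

lemma prob_UN_le_const: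
  fixes M :: "'a pmf"
  assumes "finite I" "\<And>i. i \<in> I \<Longrightarrow> measure_pmf.prob M (A i) \<le> b"
  shows "measure_pmf.prob M (\<Union>i\<in>I. A i) \<le> real (card I) * b"
proof -
  have "measure_pmf.prob M (\<Union>i\<in>I. A i) \<le> (\<Sum>i\<in>I. measure_pmf.prob M (A i))"
    by (rule prob_UN_le) fact
  also have "\<dots> \<le> (\<Sum>i\<in>I. b)" by (intro sum_mono assms)
  finally show ?thesis by simp
qed

lemma card_subsets_nat: "card {S. S \<subseteq> A \<and> card S = k} = card A choose k" if "finite A"
  using n_subsets[OF that] .




lemma core_m_exp:
  fixes n L s t p th :: real
  assumes L8: "exp 8 \<le> L"
    and R3: "1 + 9/8 * ln L \<le> L powr (3/4) * ln L / (48 * exp 2)"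
    and R4: "96 * ln (2 * exp 3 * sqrt L) \<le> L powr (1/8) * ln L"
    and nL: "L \<le> n" and s1: "n / L powr (9/8) \<le> s" and s2: "s \<le> n / L powr (1/3)"
    and L3: "2 \<le> L powr (1/3)"
    and t1: "th * (n - s) \<le> t" and t2: "t \<le> th * (n - s) + 1"
    and th: "th = 1 / (exp 2 * sqrt L)" and pdef: "p = L / n"
  shows "s * ln (exp 1 * L powr (9/8)) + t * ln (2 * exp 3 * sqrt L)
           - L powr (1/4) * s * t * p * (ln (L powr (1/4)) - 1) \<le> - (n / (48 * exp 2 * L powr (3/8)))"
proof -
  define lam where "lam = ln L"
  have Lpos: "L > 0" using L8 by (smt (verit) exp_gt_zero)
  have npos: "n > 0" using nL Lpos by auto
  have lam8: "lam \<ge> 8" unfolding lam_def using L8 Lpos by (metis ln_exp ln_le_cancel_iff exp_gt_zero)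
  have sqL: "sqrt L = L powr (1/2)" using Lpos by (simp add: powr_half_sqrt)
  have sqL4: "sqrt L \<ge> exp 4"
  proof -
    have "exp 8 = (exp 4::real)^2" by (simp add: power2_eq_square exp_add[symmetric])
    hence "sqrt (exp 8) = exp 4" by simp
    moreover have "sqrt (exp 8) \<le> sqrt L" using L8 by simp
    ultimately show ?thesis by simp
  qed
  have e2: "exp 2 * exp 2 = (exp 4::real)" by (simp add: exp_add[symmetric])
  have thpos: "th > 0" using th sqL4 by (smt (verit) divide_pos_pos exp_gt_zero mult_pos_pos)
  have thL: "th * L = sqrt L / exp 2"
  proof -
    have sp: "sqrt L > 0" using Lpos by simp
    have "th * L = (sqrt L * sqrt L) / (exp 2 * sqrt L)" using th Lpos by simp
    also have "\<dots> = sqrt L / exp 2" using sp by (simp add: field_simps)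
    finally show ?thesis .
  qed
  have thn: "th * n \<ge> 1"
  proof -
    have a: "th * n \<ge> th * L" using thpos nL by simp
    have b: "sqrt L / exp 2 \<ge> 1" using sqL4 e2 by (simp add: field_simps) (smt (verit) exp_gt_zero mult_le_cancel_left1 one_le_exp_iff)
    show ?thesis using a b thL by linarith
  qed
  have Lpow3: "L powr (1/3) > 0" using Lpos by simp
  have s_half: "s \<le> n / 2" using s2 L3 npos Lpow3 by (smt (verit) divide_left_mono mult_pos_pos)
  have spos: "s > 0" using s1 npos Lpos by (smt (verit) divide_pos_pos powr_gt_zero)
  have "th * (n / 2) \<le> th * (n - s)" using s_half thpos by (intro mult_left_mono) auto
  hence tlow: "t \<ge> th * n / 2" using t1 by simp
  have "th * (n - s) \<le> th * n" using spos thpos by (intro mult_left_mono) auto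
  hence tup: "t \<le> 2 * th * n" using t2 thn by simp
  have lnal: "ln (L powr (1/4)) = lam / 4" unfolding lam_def using Lpos by (simp add: ln_powr)
  have lnsL: "ln (exp 1 * L powr (9/8)) = 1 + 9/8 * lam" unfolding lam_def using Lpos by (simp add: ln_mult ln_powr)
  define c where "c = ln (2 * exp 3 * sqrt L)"
  have p_pos: "p > 0" using pdef Lpos npos by simp
  have tp: "t * p \<ge> sqrt L / (2 * exp 2)"
  proof -
    have "t * p \<ge> th * n / 2 * p" using tlow p_pos by (simp add: mult_right_mono)
    also have "th * n / 2 * p = th * L / 2" using pdef npos by simp
    also have "th * L = sqrt L / exp 2" by (rule thL)
    finally show ?thesis by simp
  qed
  define G where "G = s * L powr (3/4) * lam / (16 * exp 2)"
  have a34: "L powr (1/4) * sqrt L = L powr (3/4)" unfolding sqL by (simp add: powr_add[symmetric])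
  have gain: "L powr (1/4) * s * t * p * (ln (L powr (1/4)) - 1) \<ge> G"
  proof -
    have "ln (L powr (1/4)) - 1 \<ge> lam / 8" using lnal lam8 by simp
    hence "L powr (1/4) * s * t * p * (ln (L powr (1/4)) - 1) \<ge> L powr (1/4) * s * (t * p) * (lam / 8)"
      using spos tp Lpos by (smt (verit) mult_left_mono mult_nonneg_nonneg powr_ge_zero mult.assoc divide_nonneg_pos exp_gt_zero real_sqrt_ge_zero)
    moreover have "L powr (1/4) * s * (t * p) * (lam / 8) \<ge> L powr (1/4) * s * (sqrt L / (2 * exp 2)) * (lam / 8)"
      using tp spos lam8 by (intro mult_right_mono mult_left_mono) auto
    moreover have "L powr (1/4) * s * (sqrt L / (2 * exp 2)) * (lam / 8) = G"
      unfolding G_def using a34[symmetric] by (simp add: field_simps)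
    ultimately show ?thesis by linarith
  qed
  have part1: "s * (1 + 9/8 * lam) \<le> G / 3"
    using mult_left_mono[OF R3[folded lam_def] less_imp_le[OF spos]] unfolding G_def by (simp add: field_simps)
  have part2: "t * c \<le> G / 3"
  proof -
    have c0: "c \<ge> 0" unfolding c_def using sqL4 
      by (smt (verit) exp_ge_add_one_self ln_ge_zero mult_le_cancel_left1 one_le_exp_iff exp_gt_zero mult_nonneg_nonneg)
    have "t * c \<le> 2 * th * n * c" using tup c0 by (simp add: mult_right_mono)
    also have "\<dots> \<le> 2 * th * n * (L powr (1/8) * lam / 96)"
      using R4[folded c_def lam_def] thpos npos by (intro mult_left_mono) auto
    also have "\<dots> = n * lam * L powr (1/8) / (48 * exp 2 * sqrt L)" unfolding th by (simp add: field_simps)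
    also have "\<dots> = n * lam / (48 * exp 2) * (L powr (1/8) / sqrt L)" by simp
    also have "L powr (1/8) / sqrt L = 1 / L powr (3/8)"
      unfolding sqL using Lpos by (simp add: field_simps powr_add[symmetric])
    also have "n * lam / (48 * exp 2) * (1 / L powr (3/8)) = n * lam / (48 * exp 2 * L powr (3/8))"
      by simp
    also have "\<dots> \<le> G / 3"
    proof -
      have "n / L powr (3/8) = n / L powr (9/8) * L powr (3/4)"
        using Lpos by (simp add: field_simps powr_add[symmetric])
      also have "\<dots> \<le> s * L powr (3/4)" using s1 by (intro mult_right_mono) auto
      finally have "n / L powr (3/8) \<le> s * L powr (3/4)" .
      hence "n / L powr (3/8) * lam \<le> s * L powr (3/4) * lam" using lam8 by (intro mult_right_mono) auto
      thus ?thesis unfolding G_def by (simp add: field_simps)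
    qed
    finally show ?thesis .
  qed
  have fin: "- (G / 3) \<le> - (n / (48 * exp 2 * L powr (3/8)))"
  proof -
    have "n / L powr (3/8) = n / L powr (9/8) * L powr (3/4)"
      using Lpos by (simp add: field_simps powr_add[symmetric])
    also have "\<dots> \<le> s * L powr (3/4)" using s1 by (intro mult_right_mono) auto
    also have "\<dots> \<le> s * L powr (3/4) * lam" using lam8 spos by (simp add: mult_le_cancel_left1 not_less)
    finally have "n / L powr (3/8) \<le> s * L powr (3/4) * lam" .
    thus ?thesis unfolding G_def by (simp add: field_simps)
  qed
  show ?thesis unfolding lnsL using part1 part2 gain fin unfolding c_def by linarith
qed




lemma pow_exp_ln: "c > 0 \<Longrightarrow> c ^ k = exp (real k * ln c)" for c :: real
  by (simp add: exp_of_nat_mult)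

lemma bad_m:
  fixes n :: nat and p :: real
  assumes p: "0 < p" "p \<le> 1"
    and L8: "exp 8 \<le> real n * p"
    and R3: "1 + 9/8 * ln (real n * p) \<le> (real n * p) powr (3/4) * ln (real n * p) / (48 * exp 2)"
    and R4: "96 * ln (2 * exp 3 * sqrt (real n * p)) \<le> (real n * p) powr (1/8) * ln (real n * p)"
    and L3: "2 \<le> (real n * p) powr (1/3)"
  shows "measure_pmf.prob (gnp n p) {G. \<not> prop_m n p G}
           \<le> (real n + 1) * exp (- (real n / (48 * exp 2 * (real n * p) powr (3/8))))"
proof -
  define L where "L = real n * p"
  have Lpos: "L > 0" using L8 exp_gt_zero[of 8] unfolding L_def by linarith
  have npos: "real n > 0" using Lpos p unfolding L_def by (simp add: zero_less_mult_iff)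
  have nL: "L \<le> real n" unfolding L_def using mult_left_mono[of p 1 "real n"] p by simp
  define th where "th = theta n p"
  have th_eq: "th = 1 / (exp 2 * sqrt L)"
    unfolding th_def theta_def L_def[symmetric] using Lpos by (simp add: powr_half_sqrt)
  have thpos: "th > 0" unfolding th_eq using Lpos by simp
  define al where "al = alpha n p"
  have al_eq: "al = L powr (1/4)" unfolding al_def alpha_def L_def ..
  have "1 \<le> exp (8::real)" by simp
  hence L1: "L \<ge> 1" using L8 unfolding L_def by linarith
  have al1: "al \<ge> 1" unfolding al_eq using L1 by (simp add: ge_one_powr_ge_zero)
  define I where "I = {s. s \<le> n \<and> real n / L powr (9/8) \<le> real s \<and> real s \<le> real n / L powr (1/3)}"
  define tt where "tt s = nat \<lceil>th * (real n - real s)\<rceil>" for s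
  define Sub where "Sub k = {S. S \<subseteq> {..<n} \<and> card S = k}" for k
  define Ev where "Ev S T = {G. al * real (card S) * real (card T) * p \<le> real (card (G \<inter> Eset S T))}" for S T
  define B where "B = exp (- (real n / (48 * exp 2 * L powr (3/8))))"
  define Es where "Es s = exp (- (al * (real (s * tt s) * p) * (ln al - 1)))" for s
  have tt_real: "th * (real n - real s) \<le> real (tt s) \<and> real (tt s) \<le> th * (real n - real s) + 1" if "s \<le> n" for s
  proof -
    have "th * (real n - real s) \<ge> 0" using thpos that by simp
    thus ?thesis unfolding tt_def by linarith
  qed
  have incl: "{G. \<not> prop_m n p G} \<subseteq> (\<Union>s\<in>I. \<Union>S\<in>Sub s. \<Union>T\<in>{T \<in> Sub (tt s). S \<inter> T = {}}. Ev S T)"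
  proof
    fix G assume "G \<in> {G. \<not> prop_m n p G}"
    then obtain S T where ST: "S \<subseteq> {..<n}" "T \<subseteq> {..<n}" "S \<inter> T = {}"
      "real n / L powr (9/8) \<le> card S" "card S \<le> real n / L powr (1/3)"
      "int (card T) = \<lceil>th * (real n - card S)\<rceil>" "real (e_between G S T) \<ge> al * card S * card T * p"
      unfolding prop_m_def L_def th_def al_def by blast
    have "card S \<le> n" using ST(1) card_mono[of "{..<n}" S] by auto
    hence sI: "card S \<in> I" using ST unfolding I_def by auto
    have "card T = tt (card S)" unfolding tt_def using ST(6) by (metis nat_int)
    hence "T \<in> {T \<in> Sub (tt (card S)). S \<inter> T = {}}" using ST unfolding Sub_def by auto
    moreover have "S \<in> Sub (card S)" using ST unfolding Sub_def by auto
    moreover have "G \<in> Ev S T" using ST(7) unfolding Ev_def e_between_eq[OF ST(3)] by auto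
    ultimately show "G \<in> (\<Union>s\<in>I. \<Union>S\<in>Sub s. \<Union>T\<in>{T \<in> Sub (tt s). S \<inter> T = {}}. Ev S T)"
      using sI by blast
  qed
  have finSub: "finite (Sub k)" for k
    unfolding Sub_def by (rule finite_subset[of _ "Pow {..<n}"]) auto
  have cardSub: "card (Sub k) = n choose k" for k
    unfolding Sub_def using n_subsets[of "{..<n}" k] by simp
  have evb: "measure_pmf.prob (gnp n p) (Ev S T) \<le> Es s"
    if "S \<in> Sub s" "T \<in> {T \<in> Sub (tt s). S \<inter> T = {}}" for s S T
  proof -
    have ST: "S \<subseteq> {..<n}" "T \<subseteq> {..<n}" "S \<inter> T = {}" "card S = s" "card T = tt s"
      using that unfolding Sub_def by auto
    have pp: "p \<in> {0..1}" using p by auto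
    have "measure_pmf.prob (gnp n p) (Ev S T) =
          measure_pmf.prob (binomial_pmf (card (Eset S T)) p) {k. al * real s * real (tt s) * p \<le> real k}"
    proof -
      have "Ev S T = {G. al * real s * real (tt s) * p \<le> real (card (G \<inter> Eset S T))}"
        unfolding Ev_def using ST by simp
      thus ?thesis using prob_card_edges[OF pp Eset_sub[OF ST(3,1,2)], of "\<lambda>k. al * real s * real (tt s) * p \<le> real k"]
        by simp
    qed
    also have "{k. al * real s * real (tt s) * p \<le> real k} = {k. real k \<ge> al * (real (card (Eset S T)) * p)}"
      using card_Eset[OF ST(3)] ST(4,5) by (auto simp: mult_ac)
    also have "measure_pmf.prob (binomial_pmf (card (Eset S T)) p) \<dots> \<le> Es s"
      unfolding Es_def using chernoff_large[OF pp al1, of "card (Eset S T)"] card_Eset[OF ST(3)] ST(4,5) by simp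
    finally show ?thesis .
  qed
  have termb: "real (n choose s) * (real (n choose tt s) * Es s) \<le> B" if sI: "s \<in> I" for s
  proof -
    have s: "s \<le> n" "real n / L powr (9/8) \<le> real s" "real s \<le> real n / L powr (1/3)"
      using sI unfolding I_def by auto
    have tr: "th * (real n - real s) \<le> real (tt s)" "real (tt s) \<le> th * (real n - real s) + 1"
      using tt_real[OF s(1)] by auto
    have x1: "real n / L powr (9/8) > 0" using npos Lpos by simp
    have c1: "real (n choose s) \<le> (exp 1 * real n / (real n / L powr (9/8))) ^ s"
      by (rule choose_le_exp[OF x1 s(2)])
    also have "\<dots> = (exp 1 * L powr (9/8)) ^ s" using npos by simp
    also have "\<dots> = exp (real s * ln (exp 1 * L powr (9/8)))"
      using Lpos by (intro pow_exp_ln) simp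
    finally have c1: "real (n choose s) \<le> exp (real s * ln (exp 1 * L powr (9/8)))" .
    have Lp3: "L powr (1/3) > 0" using Lpos by simp
    have s_half: "real s \<le> real n / 2"
      using s(3) L3[folded L_def] npos Lp3 by (smt (verit) divide_left_mono mult_pos_pos)
    have "th * (real n / 2) \<le> th * (real n - real s)" using s_half thpos by (intro mult_left_mono) auto
    hence tlow: "th * real n / 2 \<le> real (tt s)" using tr by simp
    have x2: "th * real n / 2 > 0" using thpos npos by simp
    have "real (n choose tt s) \<le> (exp 1 * real n / (th * real n / 2)) ^ tt s"
      by (rule choose_le_exp[OF x2 tlow])
    also have "exp 1 * real n / (th * real n / 2) = 2 * exp 3 * sqrt L"
    proof -
      have "exp 1 * real n / (th * real n / 2) = 2 * exp 1 / th" using npos by (simp add: field_simps)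
      also have "\<dots> = 2 * (exp 1 * exp 2) * sqrt L" unfolding th_eq by simp
      also have "exp 1 * exp 2 = (exp 3 :: real)" by (simp add: exp_add[symmetric])
      finally show ?thesis .
    qed
    also have "(2 * exp 3 * sqrt L) ^ tt s = exp (real (tt s) * ln (2 * exp 3 * sqrt L))"
      using Lpos by (intro pow_exp_ln) simp
    finally have c2: "real (n choose tt s) \<le> exp (real (tt s) * ln (2 * exp 3 * sqrt L))" .
    have core: "real s * ln (exp 1 * L powr (9/8)) + real (tt s) * ln (2 * exp 3 * sqrt L)
           - L powr (1/4) * real s * real (tt s) * p * (ln (L powr (1/4)) - 1) \<le> - (real n / (48 * exp 2 * L powr (3/8)))"
      by (rule core_m_exp[OF L8[folded L_def] R3[folded L_def] R4[folded L_def] nL s(2) s(3) L3[folded L_def] tr th_eq])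
        (use npos in \<open>simp add: L_def\<close>)
    have "real (n choose s) * (real (n choose tt s) * Es s) \<le>
          exp (real s * ln (exp 1 * L powr (9/8))) * (exp (real (tt s) * ln (2 * exp 3 * sqrt L)) * Es s)"
      using c1 c2 by (intro mult_mono) (auto simp: Es_def)
    also have "\<dots> = exp (real s * ln (exp 1 * L powr (9/8)) + real (tt s) * ln (2 * exp 3 * sqrt L)
           - L powr (1/4) * real s * real (tt s) * p * (ln (L powr (1/4)) - 1))"
      unfolding Es_def al_eq by (simp add: exp_add[symmetric] exp_diff mult_ac)
    also have "\<dots> \<le> B" unfolding B_def using core by simp
    finally show ?thesis .
  qed
  have "measure_pmf.prob (gnp n p) {G. \<not> prop_m n p G}
        \<le> measure_pmf.prob (gnp n p) (\<Union>s\<in>I. \<Union>S\<in>Sub s. \<Union>T\<in>{T \<in> Sub (tt s). S \<inter> T = {}}. Ev S T)"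
    using incl by (intro measure_pmf.finite_measure_mono) auto
  also have "\<dots> \<le> (\<Sum>s\<in>I. measure_pmf.prob (gnp n p) (\<Union>S\<in>Sub s. \<Union>T\<in>{T \<in> Sub (tt s). S \<inter> T = {}}. Ev S T))"
    by (rule prob_UN_le) (auto simp: I_def)
  also have "\<dots> \<le> (\<Sum>s\<in>I. B)"
  proof (rule sum_mono)
    fix s assume sI: "s \<in> I"
    have inner: "measure_pmf.prob (gnp n p) (\<Union>T\<in>{T \<in> Sub (tt s). S \<inter> T = {}}. Ev S T) \<le> real (n choose tt s) * Es s"
      if "S \<in> Sub s" for S
    proof -
      have "measure_pmf.prob (gnp n p) (\<Union>T\<in>{T \<in> Sub (tt s). S \<inter> T = {}}. Ev S T)
            \<le> real (card {T \<in> Sub (tt s). S \<inter> T = {}}) * Es s"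
        by (rule prob_UN_le_const) (use finSub evb[OF that] in auto)
      also have "\<dots> \<le> real (n choose tt s) * Es s"
      proof (intro mult_right_mono)
        have "card {T \<in> Sub (tt s). S \<inter> T = {}} \<le> card (Sub (tt s))"
          by (intro card_mono finSub) auto
        thus "real (card {T \<in> Sub (tt s). S \<inter> T = {}}) \<le> real (n choose tt s)" using cardSub by simp
      qed (simp add: Es_def)
      finally show ?thesis .
    qed
    have "measure_pmf.prob (gnp n p) (\<Union>S\<in>Sub s. \<Union>T\<in>{T \<in> Sub (tt s). S \<inter> T = {}}. Ev S T)
          \<le> real (card (Sub s)) * (real (n choose tt s) * Es s)"
      by (rule prob_UN_le_const) (use finSub inner in auto)
    also have "\<dots> \<le> B" using termb[OF sI] cardSub by simp
    finally show "measure_pmf.prob (gnp n p) (\<Union>S\<in>Sub s. \<Union>T\<in>{T \<in> Sub (tt s). S \<inter> T = {}}. Ev S T) \<le> B" .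
  qed
  also have "\<dots> = real (card I) * B" by simp
  also have "\<dots> \<le> (real n + 1) * B"
  proof (intro mult_right_mono)
    have "card I \<le> card {..n}" by (intro card_mono) (auto simp: I_def)
    thus "real (card I) \<le> real n + 1" by simp
  qed (simp add: B_def)
  finally show ?thesis unfolding B_def L_def .
qed



lemma core_l_exp:
  fixes n L s m k p e th mn :: real
  assumes L2: "2 * exp 2 \<le> L"
    and RL: "ln (exp 1 * L^2) \<le> e^2 * sqrt L / (48 * exp 2)"
    and nL: "L \<le> n" and s1: "n / L^2 \<le> s" and m: "m = n - s" and m1: "n / sqrt L \<le> m"
    and k: "th * s / 2 \<le> k"
    and th: "th = 1 / (exp 2 * sqrt L)" and pdef: "p = L / n"
    and mn: "mn = min s m"
  shows "mn * ln (exp 1 * L^2) + k * ln (2 * exp 3 * sqrt L) - e^2 * (k * m * p) / 4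
           \<le> - (e^2 * n / (24 * exp 2 * L^2))"
proof -
  have e2pos: "exp 2 > (0::real)" by simp
  have Lpos: "L > 0" using L2 e2pos by linarith
  have L1: "L \<ge> 1" using L2 by (smt (verit) exp_ge_add_one_self)
  have npos: "n > 0" using nL Lpos by auto
  have sqpos: "sqrt L > 0" using Lpos by simp
  have spos: "s > 0" using s1 npos Lpos by (smt (verit) divide_pos_pos zero_less_power)
  have thpos: "th > 0" unfolding th using sqpos by simp
  have kpos: "k > 0" using k thpos spos by (smt (verit) divide_pos_pos mult_pos_pos)
  have mpos: "m > 0" using m1 npos sqpos by (smt (verit) divide_pos_pos)
  have ppos: "p > 0" using pdef Lpos npos by simp
  have e2: "e^2 \<ge> 0" by simp
  have thL: "th * L = sqrt L / exp 2"
  proof -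
    have "th * L = (sqrt L * sqrt L) / (exp 2 * sqrt L)" using th Lpos by simp
    also have "\<dots> = sqrt L / exp 2" using sqpos by (simp add: field_simps)
    finally show ?thesis .
  qed
  have mp: "m * p \<ge> sqrt L"
  proof -
    have "m * p \<ge> n / sqrt L * p" by (rule mult_right_mono[OF m1]) (use ppos in simp)
    also have "n / sqrt L * p = L / sqrt L" using pdef npos by simp
    also have "L / sqrt L = sqrt L" using sqpos by (metis real_div_sqrt less_imp_le Lpos)
    finally show ?thesis .
  qed
  have kmp1: "k * m * p \<ge> k * sqrt L" using mp kpos by (simp add: mult.assoc mult_left_mono)
  have sm: "s * m \<ge> mn * (n / 2)"
  proof (cases "s \<le> m")
    case True
    hence "mn = s" "m \<ge> n / 2" using mn m by auto
    thus ?thesis using spos by (simp add: mult_left_mono)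
  next
    case False
    hence "mn = m" "s \<ge> n / 2" using mn m by auto
    thus ?thesis using mpos by (simp add: mult_right_mono mult.commute)
  qed
  have kmp2: "k * m * p \<ge> mn * sqrt L / (4 * exp 2)"
  proof -
    have "mn * sqrt L / (4 * exp 2) = mn * (th * L) / 4" unfolding thL by simp
    also have "\<dots> = th * p / 2 * (mn * (n / 2))" using pdef npos by (simp add: field_simps)
    also have "\<dots> \<le> th * p / 2 * (s * m)" using sm thpos ppos by (intro mult_left_mono) auto
    also have "\<dots> = th * s / 2 * m * p" by simp
    also have "\<dots> \<le> k * m * p" using k mpos ppos by (simp add: mult_right_mono)
    finally show ?thesis .
  qed
  have mnpos: "mn > 0" using mn spos mpos by simp
  have part1: "mn * ln (exp 1 * L^2) \<le> e^2 * (k * m * p) / 12"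
  proof -
    have "mn * ln (exp 1 * L^2) \<le> mn * (e^2 * sqrt L / (48 * exp 2))" using RL mnpos by (intro mult_left_mono) auto
    also have "\<dots> = e^2 * (mn * sqrt L / (4 * exp 2)) / 12" by simp
    also have "\<dots> \<le> e^2 * (k * m * p) / 12" using kmp2 e2 by (intro divide_right_mono mult_left_mono) auto
    finally show ?thesis .
  qed
  have c_le: "ln (2 * exp 3 * sqrt L) \<le> ln (exp 1 * L^2)"
  proof -
    have sL: "sqrt L \<le> L"
    proof -
      have "sqrt L \<le> sqrt (L * L)" using L1 by (intro real_sqrt_le_mono) (simp add: mult_left_le)
      thus ?thesis using Lpos by simp
    qed
    have "2 * exp 3 * sqrt L = exp 1 * (2 * exp 2) * sqrt L" by (simp add: exp_add[symmetric] mult_ac)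
    also have "\<dots> \<le> exp 1 * L * L"
    proof -
      have "(2 * exp 2) * sqrt L \<le> L * L" by (rule mult_mono[OF L2 sL]) (use Lpos in auto)
      hence "exp 1 * ((2 * exp 2) * sqrt L) \<le> exp 1 * (L * L)" by (rule mult_left_mono) simp
      thus ?thesis by (simp only: mult.assoc)
    qed
    finally have "2 * exp 3 * sqrt L \<le> exp 1 * L^2" by (simp add: power2_eq_square mult_ac)
    thus ?thesis using sqpos by (subst ln_le_cancel_iff) auto
  qed
  have part2: "k * ln (2 * exp 3 * sqrt L) \<le> e^2 * (k * m * p) / 12"
  proof -
    have "ln (2 * exp 3 * sqrt L) \<le> e^2 * sqrt L / 12"
    proof -
      have "(12::real) \<le> 48 * exp 2" using exp_ge_add_one_self[of "2::real"] by linarith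
      hence "e^2 * sqrt L / (48 * exp 2) \<le> e^2 * sqrt L / 12"
        using e2 sqpos by (intro divide_left_mono) auto
      thus ?thesis using c_le RL by linarith
    qed
    hence "k * ln (2 * exp 3 * sqrt L) \<le> k * (e^2 * sqrt L / 12)" using kpos by (intro mult_left_mono) auto
    also have "\<dots> = e^2 * (k * sqrt L) / 12" by simp
    also have "\<dots> \<le> e^2 * (k * m * p) / 12" using kmp1 e2 by (intro divide_right_mono mult_left_mono) auto
    finally show ?thesis .
  qed
  have part3: "e^2 * (k * m * p) / 12 \<ge> e^2 * n / (24 * exp 2 * L^2)"
  proof -
    have "n / L^2 / (2 * exp 2) \<le> s / (2 * exp 2)" by (rule divide_right_mono[OF s1]) simp
    also have "s / (2 * exp 2) = th * s / 2 * sqrt L" unfolding th using sqpos by (simp add: field_simps)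
    also have "\<dots> \<le> k * sqrt L" using k sqpos by (simp add: mult_right_mono)
    also have "\<dots> \<le> k * m * p" by (rule kmp1)
    finally have "n / L^2 / (2 * exp 2) \<le> k * m * p" .
    hence "e^2 * (n / L^2 / (2 * exp 2)) / 12 \<le> e^2 * (k * m * p) / 12" using e2 by (intro divide_right_mono mult_left_mono) auto
    thus ?thesis by (simp add: field_simps)
  qed
  show ?thesis using part1 part2 part3 by linarith
qed




lemma bad_l:
  fixes n :: nat and p :: real
  assumes p: "0 < p" "p \<le> 1"
    and L2: "2 * exp 2 \<le> real n * p"
    and RL: "ln (exp 1 * (real n * p)^2) \<le> (eps n)^2 * sqrt (real n * p) / (48 * exp 2)"
    and e01: "0 \<le> eps n" "eps n \<le> 1"
  shows "measure_pmf.prob (gnp n p) {G. \<not> prop_l n p G}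
           \<le> (real n + 1) * (2 * exp (- ((eps n)^2 * real n / (24 * exp 2 * (real n * p)^2))))"
proof -
  define L where "L = real n * p"
  define e where "e = eps n"
  have e2pos: "exp 2 > (0::real)" by simp
  have Lpos: "L > 0" using L2 e2pos unfolding L_def by linarith
  have npos: "real n > 0" using Lpos p unfolding L_def by (simp add: zero_less_mult_iff)
  have nL: "L \<le> real n" unfolding L_def using mult_left_mono[of p 1 "real n"] p by simp
  have "(1::real) \<le> 2 * exp 2" using exp_ge_add_one_self[of "2::real"] by linarith
  hence L1: "L \<ge> 1" using L2 unfolding L_def by linarith
  have sqpos: "sqrt L > 0" using Lpos by simp
  define th where "th = theta n p"
  have th_eq: "th = 1 / (exp 2 * sqrt L)"
    unfolding th_def theta_def L_def[symmetric] using Lpos by (simp add: powr_half_sqrt)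
  have thpos: "th > 0" unfolding th_eq using Lpos by simp
  have n1_eq: "n1 n p = real n - real n / sqrt L"
    unfolding n1_def L_def[symmetric] using Lpos by (simp add: powr_half_sqrt)
  define I where "I = {s. s \<le> n \<and> real n / L^2 \<le> real s \<and> real s \<le> real n - real n / sqrt L}"
  define kk where "kk s = nat \<lceil>th * real s / 2\<rceil>" for s
  define Sub where "Sub k = {S::nat set. S \<subseteq> {..<n} \<and> card S = k}" for k
  define A where "A (S::nat set) = {..<n} - S" for S
  define Up where "Up S B = {G. (1 + e) * (real (card (Eset B (A S))) * p) \<le> real (card (G \<inter> Eset B (A S)))}" for S B
  define Dn where "Dn S B = {G. real (card (G \<inter> Eset B (A S))) \<le> (1 - e) * (real (card (Eset B (A S))) * p)}" for S B
  define Es where "Es s = exp (- (e^2 * (real (kk s * (n - s)) * p) / 4))" for s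
  define Bd where "Bd = 2 * exp (- (e^2 * real n / (24 * exp 2 * L^2)))"
  define Bs where "Bs (S::nat set) = {B. B \<subseteq> S \<and> card B = kk (card S)}" for S
  have finSub: "finite (Sub k)" for k
    unfolding Sub_def by (rule finite_subset[of _ "Pow {..<n}"]) auto
  have cardSub: "card (Sub k) = n choose k" for k
    unfolding Sub_def using n_subsets[of "{..<n}" k] by simp
  have AS: "A S \<subseteq> {..<n}" "B \<inter> A S = {}" "finite (A S)" if "B \<subseteq> S" for S B
    using that unfolding A_def by auto
  have cardA: "card (A S) = n - card S" if "S \<subseteq> {..<n}" for S
    unfolding A_def using that by (simp add: card_Diff_subset finite_subset)
  have incl: "{G. \<not> prop_l n p G} \<subseteq> (\<Union>s\<in>I. \<Union>S\<in>Sub s. \<Union>B\<in>Bs S. Up S B \<union> Dn S B)"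
  proof
    fix G assume "G \<in> {G. \<not> prop_l n p G}"
    then obtain S where S: "S \<subseteq> {..<n}" "real n / L^2 \<le> real (card S)" "real (card S) \<le> real n - real n / sqrt L"
      and big: "real (card {v \<in> S. real (deg_in G ({..<n} - S) v) \<notin>
             {(1 - e) * (real n - real (card S)) * p .. (1 + e) * (real n - real (card S)) * p}})
          > th * real (card S)"
      unfolding prop_l_def L_def[symmetric] e_def[symmetric] th_def[symmetric] n1_eq by (auto simp: not_le)
    define s where "s = card S"
    have finS: "finite S" using S(1) finite_subset by blast
    have sn: "s \<le> n" using S(1) card_mono[of "{..<n}" S] unfolding s_def by auto
    hence sI: "s \<in> I" using S unfolding I_def s_def by auto
    have SSub: "S \<in> Sub s" unfolding Sub_def s_def using S by auto
    define d where "d v = real (deg_in G (A S) v)" for v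
    define lo where "lo = (1 - e) * (real n - real s) * p"
    define hi where "hi = (1 + e) * (real n - real s) * p"
    define up where "up = {v \<in> S. hi < d v}"
    define dn where "dn = {v \<in> S. d v < lo}"
    have "{v \<in> S. real (deg_in G ({..<n} - S) v) \<notin> {lo .. hi}} \<subseteq> up \<union> dn"
      unfolding up_def dn_def d_def A_def by auto
    hence "card {v \<in> S. real (deg_in G ({..<n} - S) v) \<notin> {lo .. hi}} \<le> card (up \<union> dn)"
      using finS by (intro card_mono) (auto simp: up_def dn_def)
    also have "\<dots> \<le> card up + card dn" by (rule card_Un_le)
    finally have "th * real s < real (card up) + real (card dn)"
      using big unfolding lo_def hi_def s_def by linarith
    hence disj: "th * real s / 2 \<le> real (card up) \<or> th * real s / 2 \<le> real (card dn)" by linarith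
    have ctr: "kk s \<le> c" if "th * real s / 2 \<le> real c" for c
      unfolding kk_def using that by (simp add: nat_le_iff ceiling_le_iff)
    have Ecard: "real (card (Eset B (A S))) * p = real (kk s) * ((real n - real s) * p)" if "card B = kk s" "B \<subseteq> S" for B
      using card_Eset[OF AS(2)[OF that(2)]] cardA[OF S(1)] that(1) sn unfolding s_def by (simp add: of_nat_diff)
    have sumd: "(\<Sum>v\<in>B. d v) = real (card (G \<inter> Eset B (A S)))" if "B \<subseteq> S" for B
    proof -
      have "finite B" using finS that finite_subset by blast
      hence "(\<Sum>v\<in>B. deg_in G (A S) v) = e_between G B (A S)" using AS[OF that] by (intro sum_deg) auto
      also have "\<dots> = card (G \<inter> Eset B (A S))" by (rule e_between_eq[OF AS(2)[OF that]])
      finally show ?thesis unfolding d_def by (metis of_nat_sum)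
    qed
    from disj show "G \<in> (\<Union>s\<in>I. \<Union>S\<in>Sub s. \<Union>B\<in>Bs S. Up S B \<union> Dn S B)"
    proof
      assume "th * real s / 2 \<le> real (card up)"
      then obtain B where B: "B \<subseteq> up" "card B = kk s" using ctr obtain_subset_with_card_n by metis
      have BS: "B \<subseteq> S" using B unfolding up_def by auto
      have "real (card B) * hi = (\<Sum>v\<in>B. hi)" by simp
      also have "\<dots> \<le> (\<Sum>v\<in>B. d v)" using B unfolding up_def by (intro sum_mono) auto
      also have "\<dots> = real (card (G \<inter> Eset B (A S)))" by (rule sumd[OF BS])
      finally have "G \<in> Up S B" unfolding Up_def Ecard[OF B(2) BS] hi_def using B(2) by (simp add: mult_ac)
      moreover have "B \<in> Bs S" unfolding Bs_def using B BS s_def by auto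
      ultimately show ?thesis using sI SSub by blast
    next
      assume "th * real s / 2 \<le> real (card dn)"
      then obtain B where B: "B \<subseteq> dn" "card B = kk s" using ctr obtain_subset_with_card_n by metis
      have BS: "B \<subseteq> S" using B unfolding dn_def by auto
      have "real (card (G \<inter> Eset B (A S))) = (\<Sum>v\<in>B. d v)" by (rule sumd[OF BS, symmetric])
      also have "\<dots> \<le> (\<Sum>v\<in>B. lo)" using B unfolding dn_def by (intro sum_mono) auto
      also have "\<dots> = real (card B) * lo" by simp
      finally have "G \<in> Dn S B" unfolding Dn_def Ecard[OF B(2) BS] lo_def using B(2) by (simp add: mult_ac)
      moreover have "B \<in> Bs S" unfolding Bs_def using B BS s_def by auto
      ultimately show ?thesis using sI SSub by blast
    qed
  qed
  have pp: "p \<in> {0..1}" using p by auto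
  have evb: "measure_pmf.prob (gnp n p) (Up S B \<union> Dn S B) \<le> 2 * Es s"
    if "S \<in> Sub s" "B \<in> Bs S" for s S B
  proof -
    have S: "S \<subseteq> {..<n}" "card S = s" using that(1) unfolding Sub_def by auto
    have B: "B \<subseteq> S" "card B = kk s" using that(2) S(2) unfolding Bs_def by auto
    have sn: "s \<le> n" using S card_mono[of "{..<n}" S] by auto
    define E where "E = Eset B (A S)"
    have Esub: "E \<subseteq> all_edges n" unfolding E_def using AS[OF B(1)] S(1) B(1)
      by (intro Eset_sub) auto
    have cE: "card E = kk s * (n - s)" unfolding E_def using card_Eset[OF AS(2)[OF B(1)]] cardA[OF S(1)] B S by simp
    have "measure_pmf.prob (gnp n p) (Up S B) = measure_pmf.prob (binomial_pmf (card E) p) {k. (1 + e) * (real (card E) * p) \<le> real k}"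
      unfolding Up_def E_def[symmetric] by (rule prob_card_edges[OF pp Esub])
    also have "\<dots> \<le> exp (- (e^2 * (real (card E) * p) / 4))"
      using chernoff_upper[OF pp e01[folded e_def], of "card E"] by simp
    finally have u: "measure_pmf.prob (gnp n p) (Up S B) \<le> Es s" unfolding Es_def cE .
    have "measure_pmf.prob (gnp n p) (Dn S B) = measure_pmf.prob (binomial_pmf (card E) p) {k. real k \<le> (1 - e) * (real (card E) * p)}"
      unfolding Dn_def E_def[symmetric] by (rule prob_card_edges[OF pp Esub])
    also have "\<dots> \<le> exp (- (e^2 * (real (card E) * p) / 4))"
      using chernoff_lower[OF pp e01(1)[folded e_def], of "card E"] by simp
    finally have d: "measure_pmf.prob (gnp n p) (Dn S B) \<le> Es s" unfolding Es_def cE .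
    have "measure_pmf.prob (gnp n p) (Up S B \<union> Dn S B) \<le> measure_pmf.prob (gnp n p) (Up S B) + measure_pmf.prob (gnp n p) (Dn S B)"
      by (rule measure_Un_le) auto
    thus ?thesis using u d by simp
  qed
  have termb: "real (n choose s) * (real (card S choose kk s) * (2 * Es s)) \<le> Bd" if sI: "s \<in> I" "card S = s" for s S
  proof -
    have s: "s \<le> n" "real n / L^2 \<le> real s" "real s \<le> real n - real n / sqrt L"
      using sI unfolding I_def by auto
    have L2pos: "L^2 > 0" using Lpos by simp
    have x1: "real n / L^2 > 0" using npos L2pos by simp
    have spos: "real s > 0" using s(2) x1 by linarith
    define m where "m = real n - real s"
    have m1: "real n / sqrt L \<le> m" using s(3) unfolding m_def by simp
    have sqL: "sqrt L \<le> L^2"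
    proof -
      have "sqrt L \<le> sqrt (L * L)" using L1 by (intro real_sqrt_le_mono) (simp add: mult_left_le)
      also have "\<dots> = L" using Lpos by simp
      also have "L \<le> L^2" using L1 by (simp add: power2_eq_square mult_left_le)
      finally show ?thesis .
    qed
    have "real n / L^2 \<le> real n / sqrt L" using sqpos sqL npos by (intro divide_left_mono) auto
    hence mL: "real n / L^2 \<le> m" using m1 by linarith
    define mn where "mn = min (real s) m"
    have c1: "real (n choose s) \<le> exp (mn * ln (exp 1 * L^2))"
    proof (cases "real s \<le> m")
      case True
      have "real (n choose s) \<le> (exp 1 * real n / (real n / L^2)) ^ s" by (rule choose_le_exp[OF x1 s(2)])
      also have "\<dots> = (exp 1 * L^2) ^ s" using npos by simp
      also have "\<dots> = exp (real s * ln (exp 1 * L^2))" using Lpos by (intro pow_exp_ln) simp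
      finally show ?thesis using True unfolding mn_def by simp
    next
      case False
      have mr: "m = real (n - s)" unfolding m_def using s(1) by (simp add: of_nat_diff)
      have "real (n choose s) = real (n choose (n - s))" using binomial_symmetric[OF s(1)] by simp
      also have "\<dots> \<le> (exp 1 * real n / (real n / L^2)) ^ (n - s)" by (rule choose_le_exp[OF x1 mL[unfolded mr]])
      also have "\<dots> = (exp 1 * L^2) ^ (n - s)" using npos by simp
      also have "\<dots> = exp (real (n - s) * ln (exp 1 * L^2))" using Lpos by (intro pow_exp_ln) simp
      finally show ?thesis using False unfolding mn_def mr by simp
    qed
    have x2: "th * real s / 2 > 0" using thpos spos by simp
    have k1: "th * real s / 2 \<le> real (kk s)" unfolding kk_def by linarith
    have "real (card S choose kk s) \<le> (exp 1 * real s / (th * real s / 2)) ^ kk s"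
      unfolding sI(2) by (rule choose_le_exp[OF x2 k1])
    also have "exp 1 * real s / (th * real s / 2) = 2 * exp 3 * sqrt L"
    proof -
      have "exp 1 * real s / (th * real s / 2) = 2 * exp 1 / th" using spos by (simp add: field_simps)
      also have "\<dots> = 2 * (exp 1 * exp 2) * sqrt L" unfolding th_eq by simp
      also have "exp 1 * exp 2 = (exp 3 :: real)" by (simp add: exp_add[symmetric])
      finally show ?thesis .
    qed
    also have "(2 * exp 3 * sqrt L) ^ kk s = exp (real (kk s) * ln (2 * exp 3 * sqrt L))"
      using Lpos by (intro pow_exp_ln) simp
    finally have c2: "real (card S choose kk s) \<le> exp (real (kk s) * ln (2 * exp 3 * sqrt L))" .
    have core: "mn * ln (exp 1 * L^2) + real (kk s) * ln (2 * exp 3 * sqrt L) - e^2 * (real (kk s) * m * p) / 4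
           \<le> - (e^2 * real n / (24 * exp 2 * L^2))"
      by (rule core_l_exp[OF L2[folded L_def] RL[folded L_def e_def] nL s(2) m_def m1 k1 th_eq _ mn_def])
        (use npos in \<open>simp add: L_def\<close>)
    have Es_eq: "Es s = exp (- (e^2 * (real (kk s) * m * p) / 4))"
      unfolding Es_def m_def using s(1) by (simp add: of_nat_diff mult_ac)
    have "real (n choose s) * (real (card S choose kk s) * (2 * Es s)) \<le>
          exp (mn * ln (exp 1 * L^2)) * (exp (real (kk s) * ln (2 * exp 3 * sqrt L)) * (2 * Es s))"
      using c1 c2 by (intro mult_mono) (auto simp: Es_def)
    also have "\<dots> = 2 * exp (mn * ln (exp 1 * L^2) + real (kk s) * ln (2 * exp 3 * sqrt L) - e^2 * (real (kk s) * m * p) / 4)"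
      unfolding Es_eq by (simp add: exp_add[symmetric] exp_diff exp_minus field_simps)
    also have "\<dots> \<le> Bd" unfolding Bd_def using core by simp
    finally show ?thesis .
  qed
  have "measure_pmf.prob (gnp n p) {G. \<not> prop_l n p G}
        \<le> measure_pmf.prob (gnp n p) (\<Union>s\<in>I. \<Union>S\<in>Sub s. \<Union>B\<in>Bs S. Up S B \<union> Dn S B)"
    using incl by (intro measure_pmf.finite_measure_mono) auto
  also have "\<dots> \<le> (\<Sum>s\<in>I. measure_pmf.prob (gnp n p) (\<Union>S\<in>Sub s. \<Union>B\<in>Bs S. Up S B \<union> Dn S B))"
    by (rule prob_UN_le) (auto simp: I_def)
  also have "\<dots> \<le> (\<Sum>s\<in>I. Bd)"
  proof (rule sum_mono)
    fix s assume sI: "s \<in> I"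
    have inner: "measure_pmf.prob (gnp n p) (\<Union>B\<in>Bs S. Up S B \<union> Dn S B) \<le> real (s choose kk s) * (2 * Es s)"
      if "S \<in> Sub s" for S
    proof -
      have S: "S \<subseteq> {..<n}" "card S = s" using that unfolding Sub_def by auto
      have finS: "finite S" using S(1) finite_subset by blast
      have fB: "finite (Bs S)" unfolding Bs_def by (rule finite_subset[of _ "Pow S"]) (use finS in auto)
      have "measure_pmf.prob (gnp n p) (\<Union>B\<in>Bs S. Up S B \<union> Dn S B) \<le> real (card (Bs S)) * (2 * Es s)"
        by (rule prob_UN_le_const[OF fB]) (use evb[OF that] in auto)
      also have "card (Bs S) = s choose kk s" unfolding Bs_def using n_subsets[OF finS, of "kk (card S)"] S(2) by simp
      finally show ?thesis .
    qed
    have "measure_pmf.prob (gnp n p) (\<Union>S\<in>Sub s. \<Union>B\<in>Bs S. Up S B \<union> Dn S B)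
          \<le> real (card (Sub s)) * (real (s choose kk s) * (2 * Es s))"
      by (rule prob_UN_le_const) (use finSub inner in auto)
    also have "\<dots> \<le> Bd" using termb[OF sI, of "{..<s}"] cardSub by simp
    finally show "measure_pmf.prob (gnp n p) (\<Union>S\<in>Sub s. \<Union>B\<in>Bs S. Up S B \<union> Dn S B) \<le> Bd" .
  qed
  also have "\<dots> = real (card I) * Bd" by simp
  also have "\<dots> \<le> (real n + 1) * Bd"
  proof (intro mult_right_mono)
    have "card I \<le> card {..n}" by (intro card_mono) (auto simp: I_def)
    thus "real (card I) \<le> real n + 1" by simp
  qed (simp add: Bd_def)
  finally show ?thesis unfolding Bd_def L_def e_def .
qed




lemma RA1: "eventually (\<lambda>x::real. exp 8 \<le> x) at_top" by real_asymp
lemma RA2: "eventually (\<lambda>x::real. 1 + 9/8 * ln x \<le> x powr (3/4) * ln x / (48 * exp 2)) at_top" by real_asymp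
lemma RA3: "eventually (\<lambda>x::real. 96 * ln (2 * exp 3 * sqrt x) \<le> x powr (1/8) * ln x) at_top" by real_asymp
lemma RA4: "eventually (\<lambda>x::real. 2 \<le> x powr (1/3)) at_top" by real_asymp
lemma RA5: "eventually (\<lambda>x::real. 1 + 4 * ln (ln x) \<le> (1 / ln (ln (ln x)))^2 * sqrt (ln x) / (48 * exp 2)) at_top" by real_asymp
lemma RA6: "eventually (\<lambda>x::real. (ln x)^2 \<le> x) at_top" by real_asymp
lemma RA7: "(\<lambda>n::nat. 2 * (real n + 1) * exp (- ((1 / ln (ln (ln (real n))))^2 * real n / (24 * exp 2 * (ln (real n))^4)))) \<longlonglongrightarrow> 0" by real_asymp
lemma RA8: "(\<lambda>n::nat. (real n + 1) * exp (- (real n / (48 * exp 2 * (ln (real n))^2)))) \<longlonglongrightarrow> 0" by real_asymp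
lemma RA9: "eventually (\<lambda>x::real. 1 \<le> ln (ln (ln x))) at_top" by real_asymp
lemma RA10: "eventually (\<lambda>x::real. 2 * exp 2 \<le> x) at_top" by real_asymp

lemma per_n:
  fixes n :: nat and p :: real
  assumes n1: "n \<ge> 1" and lnpos: "ln (real n) > 0"
    and Llow: "ln (real n) \<le> real n * p" and Lup: "real n * p \<le> (ln (real n))^2"
    and L8: "exp 8 \<le> real n * p"
    and R3: "1 + 9/8 * ln (real n * p) \<le> (real n * p) powr (3/4) * ln (real n * p) / (48 * exp 2)"
    and R4: "96 * ln (2 * exp 3 * sqrt (real n * p)) \<le> (real n * p) powr (1/8) * ln (real n * p)"
    and L3: "2 \<le> (real n * p) powr (1/3)"
    and L2: "2 * exp 2 \<le> real n * p"
    and lnn: "(ln (real n))^2 \<le> real n"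
    and R5: "1 + 4 * ln (ln (real n)) \<le> (1 / ln (ln (ln (real n))))^2 * sqrt (ln (real n)) / (48 * exp 2)"
    and R9: "1 \<le> ln (ln (ln (real n)))"
  shows "1 - 2 * (real n + 1) * exp (- ((1 / ln (ln (ln (real n))))^2 * real n / (24 * exp 2 * (ln (real n))^4)))
           - (real n + 1) * exp (- (real n / (48 * exp 2 * (ln (real n))^2)))
         \<le> measure_pmf.prob (gnp n p) {G. prop_l n p G \<and> prop_m n p G}"
proof -
  define L where "L = real n * p"
  define e where "e = eps n"
  have e_eq: "e = 1 / ln (ln (ln (real n)))" unfolding e_def eps_def ..
  have npos: "real n > 0" using n1 by simp
  have Lpos: "L > 0" using L8 exp_gt_zero[of 8] unfolding L_def by linarith
  have ppos: "p > 0" using Lpos npos unfolding L_def by (simp add: zero_less_mult_iff)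
  have "real n * p \<le> real n * 1" using Lup lnn by simp
  hence p1: "p \<le> 1" using npos by simp
  have e01: "0 \<le> eps n" "eps n \<le> 1" using R9 unfolding e_eq[unfolded e_def] by auto
  have RL: "ln (exp 1 * (real n * p)^2) \<le> (eps n)^2 * sqrt (real n * p) / (48 * exp 2)"
  proof -
    have "ln (exp 1 * L^2) = 1 + 2 * ln L" using Lpos by (simp add: ln_mult ln_realpow)
    also have "\<dots> \<le> 1 + 2 * ln ((ln (real n))^2)"
    proof -
      have "ln L \<le> ln ((ln (real n))^2)" using Lpos Lup unfolding L_def by (subst ln_le_cancel_iff) auto
      thus ?thesis by simp
    qed
    also have "\<dots> = 1 + 4 * ln (ln (real n))" using lnpos by (simp add: ln_realpow)
    also have "\<dots> \<le> e^2 * sqrt (ln (real n)) / (48 * exp 2)" using R5 unfolding e_eq .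
    also have "\<dots> \<le> e^2 * sqrt L / (48 * exp 2)"
      using Llow unfolding L_def by (intro divide_right_mono mult_left_mono) auto
    finally show ?thesis unfolding L_def e_def .
  qed
  have bl: "measure_pmf.prob (gnp n p) {G. \<not> prop_l n p G}
           \<le> (real n + 1) * (2 * exp (- ((eps n)^2 * real n / (24 * exp 2 * (real n * p)^2))))"
    by (rule bad_l[OF ppos p1 L2 RL e01])
  have bm: "measure_pmf.prob (gnp n p) {G. \<not> prop_m n p G}
           \<le> (real n + 1) * exp (- (real n / (48 * exp 2 * (real n * p) powr (3/8))))"
    by (rule bad_m[OF ppos p1 L8 R3 R4 L3])
  have b1: "(real n + 1) * (2 * exp (- ((eps n)^2 * real n / (24 * exp 2 * (real n * p)^2))))
     \<le> 2 * (real n + 1) * exp (- ((1 / ln (ln (ln (real n))))^2 * real n / (24 * exp 2 * (ln (real n))^4)))"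
  proof -
    have "L^2 \<le> ((ln (real n))^2)^2" using Lup Lpos unfolding L_def by (intro power_mono) auto
    hence L4: "L^2 \<le> (ln (real n))^4" by simp
    have "e^2 * real n / (24 * exp 2 * (ln (real n))^4) \<le> e^2 * real n / (24 * exp 2 * L^2)"
      using L4 Lpos npos by (intro divide_left_mono mult_left_mono mult_pos_pos) auto
    hence ex: "exp (- (e^2 * real n / (24 * exp 2 * L^2))) \<le> exp (- (e^2 * real n / (24 * exp 2 * (ln (real n))^4)))"
      by simp
    have "(real n + 1) * (2 * exp (- (e^2 * real n / (24 * exp 2 * L^2))))
        \<le> (real n + 1) * (2 * exp (- (e^2 * real n / (24 * exp 2 * (ln (real n))^4))))"
      using ex by (intro mult_left_mono) auto
    also have "\<dots> = 2 * (real n + 1) * exp (- (e^2 * real n / (24 * exp 2 * (ln (real n))^4)))" by simp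
    finally have fin: "(real n + 1) * (2 * exp (- (e^2 * real n / (24 * exp 2 * L^2))))
        \<le> 2 * (real n + 1) * exp (- (e^2 * real n / (24 * exp 2 * (ln (real n))^4)))" .
    show ?thesis unfolding L_def[symmetric] e_def[symmetric] e_eq[symmetric] by (rule fin)
  qed
  have b2: "(real n + 1) * exp (- (real n / (48 * exp 2 * (real n * p) powr (3/8))))
     \<le> (real n + 1) * exp (- (real n / (48 * exp 2 * (ln (real n))^2)))"
  proof -
    have L1: "L \<ge> 1" using L8 unfolding L_def by (smt (verit) one_le_exp_iff)
    have "L powr (3/8) \<le> L powr 1" using L1 by (intro powr_mono) auto
    hence "L powr (3/8) \<le> (ln (real n))^2" using Lup Lpos unfolding L_def by simp
    hence "real n / (48 * exp 2 * (ln (real n))^2) \<le> real n / (48 * exp 2 * L powr (3/8))"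
      using Lpos npos by (intro divide_left_mono mult_left_mono mult_pos_pos) auto
    thus ?thesis unfolding L_def using npos by (intro mult_left_mono) auto
  qed
  have "1 = measure_pmf.prob (gnp n p) UNIV" by simp
  also have "UNIV = {G. prop_l n p G \<and> prop_m n p G} \<union> ({G. \<not> prop_l n p G} \<union> {G. \<not> prop_m n p G})" by auto
  also have "measure_pmf.prob (gnp n p) \<dots> \<le> measure_pmf.prob (gnp n p) {G. prop_l n p G \<and> prop_m n p G}
      + (measure_pmf.prob (gnp n p) {G. \<not> prop_l n p G} + measure_pmf.prob (gnp n p) {G. \<not> prop_m n p G})"
    by (intro order_trans[OF measure_Un_le] add_left_mono measure_Un_le) auto
  finally show ?thesis using bl bm b1 b2 by linarith
qed

theorem lemma1:
  fixes \<omega> p :: "nat \<Rightarrow> real"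
  assumes "filterlim \<omega> at_top sequentially"
    and "\<And>n. p n = (ln (real n) + \<omega> n) / real n"
    and "(\<lambda>n. real n * p n) \<in> O(\<lambda>n. ln (real n))"
  shows "(\<lambda>n. measure_pmf.prob (gnp n (p n)) {G. prop_l n (p n) G \<and> prop_m n (p n) G})
           \<longlonglongrightarrow> 1"
proof -
  define L where "L n = real n * p n" for n
  obtain c where c: "c > 0" "eventually (\<lambda>n. norm (real n * p n) \<le> c * norm (ln (real n))) sequentially"
    using assms(3) by (rule landau_o.bigE)
  have realev: "eventually (\<lambda>n. P (real n)) sequentially" if "eventually P at_top" for P
    using eventually_compose_filterlim[OF that filterlim_real_sequentially] .
  have lnseq: "filterlim (\<lambda>n. ln (real n)) at_top sequentially"
    by (rule filterlim_compose[OF ln_at_top filterlim_real_sequentially])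
  have ev_om: "eventually (\<lambda>n. 0 \<le> \<omega> n) sequentially" using assms(1) unfolding filterlim_at_top by blast
  have ev_lnc: "eventually (\<lambda>n. c \<le> ln (real n)) sequentially" using lnseq unfolding filterlim_at_top by blast
  have ev_n1: "eventually (\<lambda>n. 1 \<le> n) sequentially" by (rule eventually_ge_at_top)
  have Leq: "L n = ln (real n) + \<omega> n" if "n \<ge> 1" for n
    unfolding L_def assms(2) using that by simp
  have ev_Llow: "eventually (\<lambda>n. ln (real n) \<le> L n) sequentially"
    using ev_om ev_n1 by eventually_elim (simp add: Leq)
  have ev_Lup: "eventually (\<lambda>n. L n \<le> (ln (real n))^2) sequentially"
    using c(2) ev_lnc ev_n1
  proof eventually_elim
    case (elim n)
    have lp: "ln (real n) \<ge> 0" using elim(2) c(1) by linarith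
    have "L n \<le> c * ln (real n)" using elim(1) lp unfolding L_def by simp
    also have "\<dots> \<le> ln (real n) * ln (real n)" using elim(2) lp by (intro mult_right_mono) auto
    finally show ?case by (simp add: power2_eq_square)
  qed
  have Ltop: "filterlim L at_top sequentially" by (rule filterlim_at_top_mono[OF lnseq ev_Llow])
  have evL: "eventually (\<lambda>n. P (L n)) sequentially" if "eventually P at_top" for P
    using eventually_compose_filterlim[OF that Ltop] .
  define F where "F n = 1 - 2 * (real n + 1) * exp (- ((1 / ln (ln (ln (real n))))^2 * real n / (24 * exp 2 * (ln (real n))^4)))
           - (real n + 1) * exp (- (real n / (48 * exp 2 * (ln (real n))^2)))" for n
  have lower: "eventually (\<lambda>n. F n \<le> measure_pmf.prob (gnp n (p n)) {G. prop_l n (p n) G \<and> prop_m n (p n) G}) sequentially"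
    using ev_n1 ev_lnc ev_Llow ev_Lup evL[OF RA1] evL[OF RA2] evL[OF RA3] evL[OF RA4] evL[OF RA10]
      realev[OF RA6] realev[OF RA5] realev[OF RA9]
  proof eventually_elim
    case (elim n)
    have lnpos: "ln (real n) > 0" using elim(2) c(1) by linarith
    show ?case unfolding F_def
      by (rule per_n[OF elim(1) lnpos elim(3-12)[unfolded L_def]])
  qed
  have upper: "eventually (\<lambda>n. measure_pmf.prob (gnp n (p n)) {G. prop_l n (p n) G \<and> prop_m n (p n) G} \<le> 1) sequentially"
    by simp
  have "F \<longlonglongrightarrow> 1 - 0 - 0" unfolding F_def by (intro tendsto_diff tendsto_const RA7 RA8)
  hence Flim: "F \<longlonglongrightarrow> 1" by simp
  show ?thesis by (rule tendsto_sandwich[OF lower upper Flim tendsto_const])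
qed


end
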